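(* Let $p\in W^{1,\infty}(\mathbb{R}^+\times\mathbb{R}^+)$ with $p\ge0$, let $\alpha:\mathbb{R}^+\to[0,\infty)$ be bounded and of bounded variation on $\mathbb{R}^+$, and let $(n^0_j)_{j\ge1}$ be nonnegative with $\|n^0\|_1<\infty$, $\|n^0\|_\infty<\infty$ and $TV(n^0)<\infty$. Then there exist $\tau_0>0$ and constants $C_1,C_2>0$, depending only on $p$, $\alpha$, $\|n^0\|_1$ and $\|n^0\|_\infty$, such that whenever $\Delta t\le\tau_0$ and the DDM CFL condition holds, the DDM upwind scheme satisfies for every $m\in\mathbb{N}$, with $T=m\Delta t$, $$TV(n^m)\le e^{C_1T}\,TV(n^0)+C_2\left(e^{C_1T}-1\right).$$
   Context: DDM upwind scheme: fix $\Delta s,\Delta t>0$; $s_j=(j-\tfrac12)\Delta s$, $j\in\{1,2,\dots\}$; $t^m=m\Delta t$; $\alpha_k=\alpha(t^k)$. For sequences, $\|u\|_1=\sum_{j\ge1}\Delta s|u_j|$, $\|u\|_\infty=\sup_j|u_j|$. Set $X^0=0$, $N^0=\sum_{j\ge1}\Delta s\,p(s_j,0)n^0_j$. For $m\ge0$: with $n^m_0:=N^m$, $n^{m+1}_j=n^m_j-\frac{\Delta t}{\Delta s}(n^m_j-n^m_{j-1})-\Delta t\,p(s_j,X^m)n^m_j$ for $j\ge1$; then $X^{m+1}\ge0$ is the (unique under the CFL condition) solution of $X^{m+1}=\frac{\Delta t}{2}\Big(\alpha_0\sum_{j\ge1}\Delta s\,p(s_j,X^{m+1})n^{m+1}_j+\sum_{k=0}^mN^k\alpha_{m+1-k}\Big)$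 and $N^{m+1}=\sum_{j\ge1}\Delta s\,p(s_j,X^{m+1})n^{m+1}_j$. DDM CFL condition: $\Delta t<\min\Big\{\big(\frac1{\Delta s}+\|p\|_\infty\big)^{-1},\ \frac{2}{\alpha_0\|\partial_Xp\|_\infty\|n^0\|_1}\Big\}$ (second term $+\infty$ if its denominator vanishes). Discrete total variation including the boundary value: $TV(n^m)=\sum_{j\ge0}|n^m_{j+1}-n^m_j|$ with $n^m_0=N^m$. *)

theory Defs
  imports "HOL-Analysis.Analysis"
begin

text \<open>The quadrant R+ x R+ (closed; W^{1,inf} functions have a Lipschitz representative
  that extends continuously to the closure).\<close>
definition quadrant :: "(real \<times> real) set" where
  "quadrant = {0..} \<times> {0..}"

text \<open>W^{1,inf}(R+ x R+): bounded and Lipschitz (Lipschitz representative).\<close>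
definition W1inf :: "(real \<Rightarrow> real \<Rightarrow> real) \<Rightarrow> bool" where
  "W1inf p \<longleftrightarrow> bounded ((\<lambda>(s,x). p s x) ` quadrant)
      \<and> (\<exists>L. L-lipschitz_on quadrant (\<lambda>(s,x). p s x))"

definition pinf :: "(real \<Rightarrow> real \<Rightarrow> real) \<Rightarrow> real" where
  "pinf p = (SUP z\<in>quadrant. \<bar>(\<lambda>(s,x). p s x) z\<bar>)"

text \<open>sup norm of the partial derivative in X: best Lipschitz constant in X, uniformly in s\<close>
definition dXpinf :: "(real \<Rightarrow> real \<Rightarrow> real) \<Rightarrow> real" where
  "dXpinf p = (SUP z\<in>{(s,x,y). s \<ge> 0 \<and> x \<ge> 0 \<and> y \<ge> 0 \<and> x \<noteq> y}.
      (case z of (s,x,y) \<Rightarrow> \<bar>p s x - p s y\<bar> / \<bar>x - y\<bar>))"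

definition bounded_variation_on :: "real set \<Rightarrow> (real \<Rightarrow> real) \<Rightarrow> bool" where
  "bounded_variation_on S f \<longleftrightarrow> (\<exists>V. \<forall>(n::nat) (t::nat \<Rightarrow> real).
      (\<forall>i\<le>n. t i \<in> S) \<and> (\<forall>i<n. t i \<le> t (Suc i)) \<longrightarrow>
      (\<Sum>i<n. \<bar>f (t (Suc i)) - f (t i)\<bar>) \<le> V)"

definition sgrid :: "real \<Rightarrow> nat \<Rightarrow> real" where
  "sgrid ds j = (real j - 1/2) * ds"

text \<open>discrete norms over j >= 1 (index 0 is the boundary value)\<close>
definition norm1 :: "real \<Rightarrow> (nat \<Rightarrow> real) \<Rightarrow> real" where
  "norm1 ds u = (\<Sum>j. ds * \<bar>u (Suc j)\<bar>)"

definition norminf :: "(nat \<Rightarrow> real) \<Rightarrow> real" where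
  "norminf u = (SUP j. \<bar>u (Suc j)\<bar>)"

text \<open>discrete total variation including boundary value u 0\<close>
definition TV :: "(nat \<Rightarrow> real) \<Rightarrow> real" where
  "TV u = (\<Sum>j. \<bar>u (Suc j) - u j\<bar>)"

definition TV_finite :: "(nat \<Rightarrow> real) \<Rightarrow> bool" where
  "TV_finite u \<longleftrightarrow> summable (\<lambda>j. \<bar>u (Suc j) - u j\<bar>)"

text \<open>The DDM upwind scheme (n m 0 = N m is the boundary value, n m j for j >= 1 the grid values).\<close>
definition DDM_scheme :: "(real \<Rightarrow> real \<Rightarrow> real) \<Rightarrow> (real \<Rightarrow> real) \<Rightarrow> real \<Rightarrow> real
    \<Rightarrow> (nat \<Rightarrow> nat \<Rightarrow> real) \<Rightarrow> (nat \<Rightarrow> real) \<Rightarrow> (nat \<Rightarrow> real) \<Rightarrow> bool" where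
  "DDM_scheme p \<alpha> ds dt n X N \<longleftrightarrow>
     X 0 = 0 \<and>
     N 0 = (\<Sum>j. ds * p (sgrid ds (Suc j)) 0 * n 0 (Suc j)) \<and>
     (\<forall>m. n m 0 = N m) \<and>
     (\<forall>m j. j \<ge> 1 \<longrightarrow>
        n (Suc m) j = n m j - dt / ds * (n m j - n m (j - 1)) - dt * p (sgrid ds j) (X m) * n m j) \<and>
     (\<forall>m. X (Suc m) \<ge> 0 \<and>
        X (Suc m) = dt / 2 * (\<alpha> 0 * (\<Sum>j. ds * p (sgrid ds (Suc j)) (X (Suc m)) * n (Suc m) (Suc j))
                     + (\<Sum>k\<le>m. N k * \<alpha> (real (Suc m - k) * dt))) \<and>
        N (Suc m) = (\<Sum>j. ds * p (sgrid ds (Suc j)) (X (Suc m)) * n (Suc m) (Suc j)))"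

text \<open>DDM CFL condition (second bound is +inf when its denominator vanishes)\<close>
definition DDM_CFL :: "(real \<Rightarrow> real \<Rightarrow> real) \<Rightarrow> (real \<Rightarrow> real) \<Rightarrow> real \<Rightarrow> real \<Rightarrow> (nat \<Rightarrow> real) \<Rightarrow> bool" where
  "DDM_CFL p \<alpha> ds dt n0 \<longleftrightarrow>
     dt < inverse (1 / ds + pinf p) \<and>
     (\<alpha> 0 * dXpinf p * norm1 ds n0 = 0 \<or> dt < 2 / (\<alpha> 0 * dXpinf p * norm1 ds n0))"

end

theory Submission
  imports Defs
begin


lemma tele_shift:
  fixes u :: "nat \<Rightarrow> real"
  assumes "summable (\<lambda>j. u (Suc j))"
  shows "(\<lambda>j. u (Suc j) - u j) sums (- u 0)"
proof -
  have "(\<lambda>j. u (Suc j)) \<longlonglongrightarrow> 0" using summable_LIMSEQ_zero[OF assms] .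
  hence "u \<longlonglongrightarrow> 0" by (rule filterlim_sequentially_Suc[THEN iffD1])
  from telescope_sums[OF this] show ?thesis by simp
qed

lemma abs_suminf_le:
  fixes f g :: "nat \<Rightarrow> real"
  assumes "\<And>j. \<bar>f j\<bar> \<le> g j" "summable g"
  shows "summable f" "\<bar>suminf f\<bar> \<le> suminf g"
proof -
  show sf: "summable f" by (rule summable_comparison_test'[where g=g]) (use assms in auto)
  have "suminf f \<le> suminf g" by (rule suminf_le) (use assms sf in \<open>auto simp: abs_le_iff\<close>)
  moreover have "- suminf f \<le> suminf g"
  proof -
    have "suminf (\<lambda>j. - f j) \<le> suminf g" by (rule suminf_le) (use assms sf summable_minus in \<open>auto simp: abs_le_iff\<close>)
    thus ?thesis using suminf_minus[OF sf] by simp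
  qed
  ultimately show "\<bar>suminf f\<bar> \<le> suminf g" by linarith
qed

locale ddm_step =
  fixes u v q :: "nat \<Rightarrow> real" and lam dt ds P K :: real
  assumes ds: "ds > 0" and dt: "dt > 0" and lam: "lam = dt/ds" and cfl: "lam + dt*P \<le> 1"
  and q: "\<And>j. j \<ge> 1 \<Longrightarrow> 0 \<le> q j \<and> q j \<le> P"
  and qK: "\<And>j. j \<ge> 1 \<Longrightarrow> \<bar>q (Suc j) - q j\<bar> \<le> K*ds"
  and u0: "\<And>j. 0 \<le> u j"
  and us: "summable (\<lambda>j. u (Suc j))"
  and ut: "summable (\<lambda>j. \<bar>u (Suc j) - u j\<bar>)"
  and v: "\<And>j. j \<ge> 1 \<Longrightarrow> v j = u j - lam*(u j - u (j-1)) - dt*q j*u j"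
begin

lemma P0: "P \<ge> 0" using q[of 1] by auto
lemma lam0: "lam \<ge> 0" using lam ds dt by simp
lemma ds_lam: "ds * lam = dt" using lam ds by simp

lemma vS: "v (Suc j) = (1 - lam - dt*q (Suc j)) * u (Suc j) + lam * u j"
  using v[of "Suc j"] by (simp add: algebra_simps)

lemma coef: "j \<ge> 1 \<Longrightarrow> 0 \<le> 1 - lam - dt*q j \<and> 1 - lam - dt*q j \<le> 1 - lam"
proof -
  assume j: "j \<ge> 1"
  have "dt * q j \<le> dt * P" using q[OF j] dt by (intro mult_left_mono) auto
  moreover have "0 \<le> dt * q j" using q[OF j] dt by simp
  ultimately show ?thesis using cfl by linarith
qed

lemma v_nonneg: "j \<ge> 1 \<Longrightarrow> v j \<ge> 0"
proof -
  assume j: "j \<ge> 1"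
  then obtain i where i: "j = Suc i" by (cases j) auto
  show ?thesis unfolding i vS using coef[of "Suc i"] lam0 u0[of i] u0[of "Suc i"]
    by (intro add_nonneg_nonneg mult_nonneg_nonneg) auto
qed

lemma u_summ: "summable u" using us summable_Suc_iff by blast

lemma v_summ: "summable (\<lambda>j. v (Suc j))"
proof (rule summable_comparison_test'[where g="\<lambda>j. u (Suc j) + lam * u j"])
  show "summable (\<lambda>j. u (Suc j) + lam * u j)" using us u_summ by (intro summable_add summable_mult) auto
  fix j
  have "(1 - lam - dt*q (Suc j)) * u (Suc j) \<le> 1 * u (Suc j)"
    using coef[of "Suc j"] u0[of "Suc j"] lam0 by (intro mult_right_mono) auto
  thus "norm (v (Suc j)) \<le> u (Suc j) + lam * u j"
    using v_nonneg[of "Suc j"] vS[of j] by simp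
qed

lemma qu_summ: "summable (\<lambda>j. q (Suc j) * u (Suc j))"
proof (rule summable_comparison_test'[where g="\<lambda>j. P * u (Suc j)"])
  show "summable (\<lambda>j. P * u (Suc j))" using us by simp
  fix j show "norm (q (Suc j) * u (Suc j)) \<le> P * u (Suc j)"
    using q[of "Suc j"] u0[of "Suc j"] by (simp add: abs_mult mult_right_mono)
qed

lemma mass: "(\<Sum>j. ds * v (Suc j)) = (\<Sum>j. ds * u (Suc j)) + dt * u 0 - dt * (\<Sum>j. ds * q (Suc j) * u (Suc j))"
proof -
  have t: "(\<lambda>j. u (Suc j) - u j) sums (- u 0)" by (rule tele_shift[OF us])
  have e: "(\<lambda>j. ds * v (Suc j)) = (\<lambda>j. ds * u (Suc j) - dt * (u (Suc j) - u j) - (ds*dt) * (q (Suc j) * u (Suc j)))"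
    using ds_lam by (auto simp: v algebra_simps)
  have s1: "(\<lambda>j. ds * u (Suc j)) sums (\<Sum>j. ds * u (Suc j))" using us by (intro summable_sums) simp
  have s2: "(\<lambda>j. dt * (u (Suc j) - u j)) sums (dt * (- u 0))" using sums_mult[OF t] .
  have s3: "(\<lambda>j. (ds*dt) * (q (Suc j) * u (Suc j))) sums ((ds*dt) * (\<Sum>j. q (Suc j) * u (Suc j)))"
    using sums_mult[OF summable_sums[OF qu_summ]] .
  have "(\<lambda>j. ds * v (Suc j)) sums ((\<Sum>j. ds * u (Suc j)) - dt * (- u 0) - (ds*dt) * (\<Sum>j. q (Suc j) * u (Suc j)))"
    unfolding e by (intro sums_diff s1 s2 s3)
  moreover have "(\<Sum>j. ds * q (Suc j) * u (Suc j)) = ds * (\<Sum>j. q (Suc j) * u (Suc j))"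
    using suminf_mult[OF qu_summ, of ds] by (simp add: mult.assoc)
  ultimately show ?thesis by (simp add: sums_iff algebra_simps)
qed

lemma ut_summ: "summable (\<lambda>j. \<bar>u (Suc (Suc j)) - u (Suc j)\<bar>)"
  using ut summable_Suc_iff[where f="\<lambda>j. \<bar>u (Suc j) - u j\<bar>"] by simp

lemma tv_step:
  shows "summable (\<lambda>j. \<bar>v (Suc j) - v j\<bar>)"
    and "(\<Sum>j. \<bar>v (Suc j) - v j\<bar>) \<le> (\<Sum>j. \<bar>u (Suc j) - u j\<bar>) + dt*K*(\<Sum>j. ds * u (Suc j))
          + \<bar>u 0 - v 0\<bar> + dt*P*u 0"
proof -
  define g where "g j = (1-lam)*\<bar>u (Suc (Suc j)) - u (Suc j)\<bar> + lam*\<bar>u (Suc j) - u j\<bar> + (dt*K)*(ds*u (Suc j))" for j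
  have bnd: "\<bar>v (Suc (Suc j)) - v (Suc j)\<bar> \<le> g j" for j
  proof -
    have eq: "v (Suc (Suc j)) - v (Suc j) = (1-lam-dt*q (Suc (Suc j)))*(u (Suc (Suc j)) - u (Suc j))
       + lam*(u (Suc j) - u j) + dt*((q (Suc j) - q (Suc (Suc j)))*u (Suc j))"
      using vS[of j] vS[of "Suc j"] by (simp add: algebra_simps)
    have c: "0 \<le> 1-lam-dt*q (Suc (Suc j))" "1-lam-dt*q (Suc (Suc j)) \<le> 1-lam" using coef[of "Suc (Suc j)"] by auto
    have a1: "\<bar>(1-lam-dt*q (Suc (Suc j)))*(u (Suc (Suc j)) - u (Suc j))\<bar> \<le> (1-lam)*\<bar>u (Suc (Suc j)) - u (Suc j)\<bar>"
      using c by (simp add: abs_mult mult_right_mono)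
    have a2: "\<bar>lam*(u (Suc j) - u j)\<bar> = lam*\<bar>u (Suc j) - u j\<bar>" using lam0 by (simp add: abs_mult)
    have "\<bar>(q (Suc j) - q (Suc (Suc j)))*u (Suc j)\<bar> \<le> (K*ds)*u (Suc j)"
      using qK[of "Suc j"] u0[of "Suc j"] by (simp add: abs_mult abs_minus_commute mult_right_mono)
    hence a3: "\<bar>dt*((q (Suc j) - q (Suc (Suc j)))*u (Suc j))\<bar> \<le> (dt*K)*(ds*u (Suc j))"
      using dt by (simp add: abs_mult mult_left_mono mult.assoc)
    show ?thesis unfolding eq g_def using a1 a2 a3 abs_triangle_ineq[of "_ + _" "_"] abs_triangle_ineq
      by (smt (verit))
  qed
  have sg: "summable g" unfolding g_def
    using ut_summ ut us by (intro summable_add summable_mult) auto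
  have s1: "summable (\<lambda>j. \<bar>v (Suc (Suc j)) - v (Suc j)\<bar>)"
    by (rule summable_comparison_test'[OF sg]) (use bnd in auto)
  have b1: "(\<Sum>j. \<bar>v (Suc (Suc j)) - v (Suc j)\<bar>) \<le> suminf g"
    by (rule suminf_le[OF bnd s1 sg])
  show sv: "summable (\<lambda>j. \<bar>v (Suc j) - v j\<bar>)"
    using s1 summable_Suc_iff[where f="\<lambda>j. \<bar>v (Suc j) - v j\<bar>"] by simp
  have sumg: "suminf g = (1-lam)*((\<Sum>j. \<bar>u (Suc j) - u j\<bar>) - \<bar>u 1 - u 0\<bar>) + lam*(\<Sum>j. \<bar>u (Suc j) - u j\<bar>)
      + (dt*K)*(\<Sum>j. ds * u (Suc j))"
  proof -
    have h: "(\<Sum>j. \<bar>u (Suc (Suc j)) - u (Suc j)\<bar>) = (\<Sum>j. \<bar>u (Suc j) - u j\<bar>) - \<bar>u 1 - u 0\<bar>"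
      using suminf_split_head[OF ut] by simp
    have "suminf g = (1-lam)*(\<Sum>j. \<bar>u (Suc (Suc j)) - u (Suc j)\<bar>) + lam*(\<Sum>j. \<bar>u (Suc j) - u j\<bar>)
      + (dt*K)*(\<Sum>j. ds * u (Suc j))"
      unfolding g_def
      apply (subst suminf_add[symmetric])
        apply (intro summable_add summable_mult ut_summ ut)
       apply (intro summable_mult) using us apply simp
      apply (subst suminf_add[symmetric])
        apply (intro summable_mult ut_summ)
       apply (intro summable_mult ut)
      apply (subst suminf_mult[symmetric], rule ut_summ)
      apply (subst suminf_mult[symmetric], rule ut)
      apply (subst suminf_mult[symmetric]) using us apply simp
      by simp
    thus ?thesis using h by simp
  qed
  have e0: "\<bar>v 1 - v 0\<bar> \<le> (1-lam)*\<bar>u 1 - u 0\<bar> + \<bar>u 0 - v 0\<bar> + dt*P*u 0"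
  proof -
    have eq: "v 1 - v 0 = (1-lam-dt*q 1)*(u 1 - u 0) + (u 0 - v 0) - dt*q 1*u 0"
      using vS[of 0] by (simp add: algebra_simps)
    have c: "0 \<le> 1-lam-dt*q 1" "1-lam-dt*q 1 \<le> 1-lam" using coef[of 1] by auto
    have a1: "\<bar>(1-lam-dt*q 1)*(u 1 - u 0)\<bar> \<le> (1-lam)*\<bar>u 1 - u 0\<bar>"
      using c by (simp add: abs_mult mult_right_mono)
    have "q 1 * u 0 \<le> P * u 0" using q[of 1] u0[of 0] by (simp add: mult_right_mono)
    hence a3: "\<bar>dt*q 1*u 0\<bar> \<le> dt*P*u 0" using dt q[of 1] u0[of 0]
      by (simp add: abs_mult mult_left_mono mult.assoc)
    show ?thesis unfolding eq using a1 a3 by linarith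
  qed
  have "(\<Sum>j. \<bar>v (Suc j) - v j\<bar>) = \<bar>v 1 - v 0\<bar> + (\<Sum>j. \<bar>v (Suc (Suc j)) - v (Suc j)\<bar>)"
    using suminf_split_head[OF sv] by simp
  also have "\<dots> \<le> (1-lam)*\<bar>u 1 - u 0\<bar> + \<bar>u 0 - v 0\<bar> + dt*P*u 0 + suminf g" using e0 b1 by linarith
  finally show "(\<Sum>j. \<bar>v (Suc j) - v j\<bar>) \<le> (\<Sum>j. \<bar>u (Suc j) - u j\<bar>) + dt*K*(\<Sum>j. ds * u (Suc j))
          + \<bar>u 0 - v 0\<bar> + dt*P*u 0" unfolding sumg by (simp add: algebra_simps)
qed

lemma N_step:
  "\<bar>(\<Sum>j. ds * q (Suc j) * v (Suc j)) - (\<Sum>j. ds * q (Suc j) * u (Suc j))\<bar>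
     \<le> dt*P*(\<Sum>j. \<bar>u (Suc j) - u j\<bar>) + dt*P^2*(\<Sum>j. ds * u (Suc j))"
proof -
  have sa: "summable (\<lambda>j. ds * q (Suc j) * u (Suc j))" using qu_summ summable_mult[OF qu_summ, of ds]
    by (simp add: mult.assoc)
  have sb: "summable (\<lambda>j. ds * q (Suc j) * v (Suc j))"
  proof (rule summable_comparison_test'[where g="\<lambda>j. (ds*P) * v (Suc j)"])
    show "summable (\<lambda>j. (ds*P) * v (Suc j))" using v_summ by simp
    fix j show "norm (ds * q (Suc j) * v (Suc j)) \<le> (ds*P) * v (Suc j)"
      using q[of "Suc j"] v_nonneg[of "Suc j"] ds by (simp add: abs_mult mult_right_mono mult_left_mono)
  qed
  define f where "f j = ds * q (Suc j) * v (Suc j) - ds * q (Suc j) * u (Suc j)" for j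
  define g where "g j = (dt*P)*\<bar>u (Suc j) - u j\<bar> + (dt*P^2)*(ds * u (Suc j))" for j
  have bnd: "\<bar>f j\<bar> \<le> g j" for j
  proof -
    have eq: "f j = - (dt * q (Suc j)) * (u (Suc j) - u j) - (dt*ds) * (q (Suc j))^2 * u (Suc j)"
    proof -
      have vv: "v (Suc j) = u (Suc j) - lam*(u (Suc j)-u j) - dt*q (Suc j)*u (Suc j)" using v[of "Suc j"] by simp
      have "f j = ds*q (Suc j)*(v (Suc j) - u (Suc j))" unfolding f_def by (simp add: algebra_simps)
      also have "\<dots> = ds*q (Suc j)*(- lam*(u (Suc j)-u j) - dt*q (Suc j)*u (Suc j))" using vv by simp
      also have "\<dots> = - ((ds*lam) * q (Suc j)) * (u (Suc j) - u j) - (dt*ds) * (q (Suc j))^2 * u (Suc j)"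
        by (simp add: algebra_simps power2_eq_square)
      finally show ?thesis using ds_lam by simp
    qed
    have qq: "0 \<le> q (Suc j)" "q (Suc j) \<le> P" using q[of "Suc j"] by auto
    have a1: "\<bar>- (dt * q (Suc j)) * (u (Suc j) - u j)\<bar> \<le> (dt*P)*\<bar>u (Suc j) - u j\<bar>"
      using qq dt by (simp add: abs_mult mult_right_mono mult_left_mono)
    have "(q (Suc j))^2 \<le> P^2" using qq by (simp add: power_mono)
    hence "(dt*ds) * (q (Suc j))^2 * u (Suc j) \<le> (dt*ds) * P^2 * u (Suc j)"
      using dt ds u0[of "Suc j"] by (intro mult_right_mono mult_left_mono) auto
    moreover have "0 \<le> (dt*ds) * (q (Suc j))^2 * u (Suc j)" using dt ds u0[of "Suc j"] by simp
    ultimately have a2: "\<bar>(dt*ds) * (q (Suc j))^2 * u (Suc j)\<bar> \<le> (dt*P^2)*(ds * u (Suc j))"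
      by (simp add: algebra_simps)
    show ?thesis unfolding eq g_def using a1 a2 by linarith
  qed
  have sg: "summable g" unfolding g_def using ut us by (intro summable_add summable_mult) auto
  have "\<bar>suminf f\<bar> \<le> suminf g" by (rule abs_suminf_le(2)[OF bnd sg])
  moreover have "suminf f = (\<Sum>j. ds * q (Suc j) * v (Suc j)) - (\<Sum>j. ds * q (Suc j) * u (Suc j))"
    unfolding f_def by (rule suminf_diff[OF sb sa, symmetric])
  moreover have "suminf g = dt*P*(\<Sum>j. \<bar>u (Suc j) - u j\<bar>) + dt*P^2*(\<Sum>j. ds * u (Suc j))"
    unfolding g_def
    apply (subst suminf_add[symmetric])
      apply (intro summable_mult ut) using us apply simp
    apply (subst suminf_mult[symmetric], rule ut)
    apply (subst suminf_mult[symmetric]) using us apply simp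
    by simp
  ultimately show ?thesis by simp
qed

end


lemma p_facts:
  assumes W: "W1inf p"
  shows "\<exists>K\<ge>0. \<forall>s s' x. s \<ge> 0 \<longrightarrow> s' \<ge> 0 \<longrightarrow> x \<ge> 0 \<longrightarrow> \<bar>p s x - p s' x\<bar> \<le> K * \<bar>s - s'\<bar>"
    and "\<forall>s x. s \<ge> 0 \<longrightarrow> x \<ge> 0 \<longrightarrow> \<bar>p s x\<bar> \<le> pinf p"
    and "\<forall>s x y. s \<ge> 0 \<longrightarrow> x \<ge> 0 \<longrightarrow> y \<ge> 0 \<longrightarrow> \<bar>p s x - p s y\<bar> \<le> dXpinf p * \<bar>x - y\<bar>"
    and "dXpinf p \<ge> 0"
proof -
  from W obtain K where K: "K-lipschitz_on quadrant (\<lambda>(s,x). p s x)" and bd: "bounded ((\<lambda>(s,x). p s x) ` quadrant)"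
    unfolding W1inf_def by blast
  have K0: "K \<ge> 0" using K by (simp add: lipschitz_on_def)
  have Kd: "\<bar>p s x - p s' x'\<bar> \<le> K * sqrt ((s - s')^2 + (x - x')^2)"
    if "s \<ge> 0" "s' \<ge> 0" "x \<ge> 0" "x' \<ge> 0" for s s' x x'
  proof -
    have "(s,x) \<in> quadrant" "(s',x') \<in> quadrant" using that by (auto simp: quadrant_def)
    hence "dist (p s x) (p s' x') \<le> K * dist (s,x) (s',x')"
      using K unfolding lipschitz_on_def by fastforce
    thus ?thesis by (simp add: dist_Pair_Pair dist_real_def)
  qed
  show "\<exists>K\<ge>0. \<forall>s s' x. s \<ge> 0 \<longrightarrow> s' \<ge> 0 \<longrightarrow> x \<ge> 0 \<longrightarrow> \<bar>p s x - p s' x\<bar> \<le> K * \<bar>s - s'\<bar>"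
  proof (intro exI[of _ K] conjI allI impI K0)
    fix s s' x :: real assume h: "s \<ge> 0" "s' \<ge> 0" "x \<ge> 0"
    have "\<bar>p s x - p s' x\<bar> \<le> K * sqrt ((s - s')^2 + (x - x)^2)" using Kd[OF h(1,2,3,3)] .
    thus "\<bar>p s x - p s' x\<bar> \<le> K * \<bar>s - s'\<bar>" by simp
  qed
  have bda: "bdd_above ((\<lambda>z. \<bar>(\<lambda>(s,x). p s x) z\<bar>) ` quadrant)"
  proof -
    from bd obtain B where "\<forall>y\<in>(\<lambda>(s,x). p s x) ` quadrant. norm y \<le> B" by (auto simp: bounded_iff)
    thus ?thesis by (intro bdd_aboveI[of _ B]) auto
  qed
  show "\<forall>s x. s \<ge> 0 \<longrightarrow> x \<ge> 0 \<longrightarrow> \<bar>p s x\<bar> \<le> pinf p"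
  proof (intro allI impI)
    fix s x :: real assume "s \<ge> 0" "x \<ge> 0"
    hence "(s,x) \<in> quadrant" by (auto simp: quadrant_def)
    from cSUP_upper[OF this bda] show "\<bar>p s x\<bar> \<le> pinf p" unfolding pinf_def by simp
  qed
  define S where "S = {(s::real,x::real,y::real). s \<ge> 0 \<and> x \<ge> 0 \<and> y \<ge> 0 \<and> x \<noteq> y}"
  define f where "f = (\<lambda>z::real\<times>real\<times>real. case z of (s,x,y) \<Rightarrow> \<bar>p s x - p s y\<bar> / \<bar>x - y\<bar>)"
  have D: "dXpinf p = (SUP z\<in>S. f z)" unfolding dXpinf_def S_def f_def by simp
  have fK: "f z \<le> K" if "z \<in> S" for z
  proof -
    obtain s x y where z: "z = (s,x,y)" by (cases z) auto
    have h: "s \<ge> 0" "x \<ge> 0" "y \<ge> 0" "x \<noteq> y" using that z S_def by auto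
    have "\<bar>p s x - p s y\<bar> \<le> K * \<bar>x - y\<bar>" using Kd[of s s x y] h by simp
    thus ?thesis using h by (simp add: z f_def divide_le_eq)
  qed
  have bdf: "bdd_above (f ` S)" using fK by (intro bdd_aboveI[of _ K]) auto
  show "\<forall>s x y. s \<ge> 0 \<longrightarrow> x \<ge> 0 \<longrightarrow> y \<ge> 0 \<longrightarrow> \<bar>p s x - p s y\<bar> \<le> dXpinf p * \<bar>x - y\<bar>"
  proof (intro allI impI)
    fix s x y :: real assume h: "s \<ge> 0" "x \<ge> 0" "y \<ge> 0"
    show "\<bar>p s x - p s y\<bar> \<le> dXpinf p * \<bar>x - y\<bar>"
    proof (cases "x = y")
      case True thus ?thesis by simp
    next
      case False
      hence "(s,x,y) \<in> S" using h S_def by auto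
      from cSUP_upper[OF this bdf] have "f (s,x,y) \<le> dXpinf p" unfolding D .
      thus ?thesis using False by (simp add: f_def divide_le_eq)
    qed
  qed
  have "(0,0,1) \<in> S" unfolding S_def by auto
  from cSUP_upper[OF this bdf] have "f (0,0,1) \<le> dXpinf p" unfolding D .
  moreover have "f (0,0,1) \<ge> 0" by (simp add: f_def)
  ultimately show "dXpinf p \<ge> 0" by linarith
qed

lemma X_diff:
  fixes \<alpha> N X :: "nat \<Rightarrow> real" and al :: "real \<Rightarrow> real"
  assumes dt: "dt > 0" and A: "\<And>t. t \<ge> 0 \<Longrightarrow> \<bar>al t\<bar> \<le> A"
    and V: "\<And>(n::nat) (t::nat \<Rightarrow> real). (\<forall>i\<le>n. t i \<ge> 0) \<and> (\<forall>i<n. t i \<le> t (Suc i)) \<Longrightarrow>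
      (\<Sum>i<n. \<bar>al (t (Suc i)) - al (t i)\<bar>) \<le> V"
    and V0: "V \<ge> 0" and a0: "al 0 \<ge> 0"
    and N: "\<And>k. 0 \<le> N k \<and> N k \<le> B"
    and X0: "X 0 = 0"
    and XS: "\<And>m. X (Suc m) = dt/2*(al 0 * N (Suc m) + (\<Sum>k\<le>m. N k * al (real (Suc m - k) * dt)))"
  shows "\<bar>X (Suc m) - X m\<bar> \<le> dt/2*al 0*\<bar>N (Suc m) - N m\<bar> + dt*(B*(A+V))"
proof -
  have B0: "B \<ge> 0" using N[of 0] by auto
  have NA: "\<bar>N k * al t\<bar> \<le> B*A" if "t \<ge> 0" for k t
    using N[of k] A[OF that] B0 by (simp add: abs_mult mult_mono)
  have al0A: "al 0 \<le> A" using A[of 0] by simp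
  show ?thesis
  proof (cases m)
    case 0
    have "X (Suc m) - X m = dt/2*(al 0 * (N 1 - N 0) + al 0 * N 0 + N 0 * al (dt))"
      using XS[of 0] X0 0 by (simp add: algebra_simps)
    moreover have "\<bar>al 0 * N 0\<bar> \<le> B*A" using NA[of 0 0] by (simp add: mult.commute)
    moreover have "\<bar>N 0 * al dt\<bar> \<le> B*A" using NA[of dt 0] dt by simp
    moreover have "\<bar>al 0 * (N 1 - N 0)\<bar> = al 0 * \<bar>N 1 - N 0\<bar>" using a0 by (simp add: abs_mult)
    ultimately have "\<bar>X (Suc m) - X m\<bar> \<le> dt/2*(al 0 * \<bar>N 1 - N 0\<bar> + 2*(B*A))"
    proof -
      assume e: "X (Suc m) - X m = dt/2*(al 0 * (N 1 - N 0) + al 0 * N 0 + N 0 * al (dt))"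
        and h1: "\<bar>al 0 * N 0\<bar> \<le> B*A" and h2: "\<bar>N 0 * al dt\<bar> \<le> B*A"
        and h3: "\<bar>al 0 * (N 1 - N 0)\<bar> = al 0 * \<bar>N 1 - N 0\<bar>"
      have "\<bar>al 0 * (N 1 - N 0) + al 0 * N 0 + N 0 * al (dt)\<bar> \<le> al 0 * \<bar>N 1 - N 0\<bar> + 2*(B*A)"
        using h1 h2 h3 by linarith
      hence "dt/2 * \<bar>al 0 * (N 1 - N 0) + al 0 * N 0 + N 0 * al (dt)\<bar> \<le> dt/2*(al 0 * \<bar>N 1 - N 0\<bar> + 2*(B*A))"
        using dt by (intro mult_left_mono) auto
      thus ?thesis unfolding e using dt by (simp add: abs_mult)
    qed
    also have "\<dots> \<le> dt/2*al 0*\<bar>N (Suc m) - N m\<bar> + dt*(B*(A+V))"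
      using 0 dt B0 V0 by (simp add: algebra_simps)
    finally show ?thesis .
  next
    case (Suc m')
    define g where "g k = \<bar>al (real (Suc (Suc m') - k) * dt) - al (real (Suc m' - k) * dt)\<bar>" for k
    have gV: "(\<Sum>k\<le>m'. g k) \<le> V"
    proof -
      have "(\<Sum>k\<le>m'. g k) = (\<Sum>k\<in>{0..<Suc m'}. g k)" by (simp add: atLeast0LessThan lessThan_Suc_atMost)
      also have "\<dots> = (\<Sum>i\<in>{0..<Suc m'}. g (Suc m' + 0 - Suc i))" by (rule sum.atLeastLessThan_rev)
      also have "\<dots> = (\<Sum>i<Suc m'. \<bar>al ((\<lambda>i. real (Suc i) * dt) (Suc i)) - al ((\<lambda>i. real (Suc i) * dt) i)\<bar>)"
        unfolding atLeast0LessThan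
        by (intro sum.cong refl) (auto simp: g_def Suc_diff_le of_nat_diff)
      also have "\<dots> \<le> V" by (rule V) (use dt in \<open>auto intro: mult_right_mono\<close>)
      finally show ?thesis .
    qed
    have SS: "(\<Sum>k\<le>Suc m'. N k * al (real (Suc (Suc m') - k) * dt)) - (\<Sum>k\<le>m'. N k * al (real (Suc m' - k) * dt))
      = N (Suc m') * al dt + (\<Sum>k\<le>m'. N k * (al (real (Suc (Suc m') - k) * dt) - al (real (Suc m' - k) * dt)))"
    proof -
      have "(\<Sum>k\<le>Suc m'. N k * al (real (Suc (Suc m') - k) * dt)) =
        (\<Sum>k\<le>m'. N k * al (real (Suc (Suc m') - k) * dt)) + N (Suc m') * al dt" by simp
      moreover have "(\<Sum>k\<le>m'. N k * al (real (Suc (Suc m') - k) * dt)) - (\<Sum>k\<le>m'. N k * al (real (Suc m' - k) * dt))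
        = (\<Sum>k\<le>m'. N k * (al (real (Suc (Suc m') - k) * dt) - al (real (Suc m' - k) * dt)))"
        by (simp only: sum_subtractf[symmetric] right_diff_distrib)
      ultimately show ?thesis by linarith
    qed
    have b1: "\<bar>\<Sum>k\<le>m'. N k * (al (real (Suc (Suc m') - k) * dt) - al (real (Suc m' - k) * dt))\<bar> \<le> B * V"
    proof -
      have "\<bar>\<Sum>k\<le>m'. N k * (al (real (Suc (Suc m') - k) * dt) - al (real (Suc m' - k) * dt))\<bar>
          \<le> (\<Sum>k\<le>m'. B * g k)"
        by (rule order_trans[OF sum_abs sum_mono]) (use N B0 in \<open>auto simp: g_def abs_mult intro: mult_right_mono\<close>)
      also have "\<dots> \<le> B * V" using gV B0 by (simp add: sum_distrib_left[symmetric] mult_left_mono)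
      finally show ?thesis .
    qed
    have b2: "\<bar>N (Suc m') * al dt\<bar> \<le> B*A" using NA[of dt] dt by simp
    have "X (Suc m) - X m = dt/2*(al 0 * (N (Suc m) - N m) +
       ((\<Sum>k\<le>Suc m'. N k * al (real (Suc (Suc m') - k) * dt)) - (\<Sum>k\<le>m'. N k * al (real (Suc m' - k) * dt))))"
      using XS[of m] XS[of m'] Suc by (simp add: algebra_simps)
    hence "\<bar>X (Suc m) - X m\<bar> \<le> dt/2*(al 0 * \<bar>N (Suc m) - N m\<bar> + (B*A + B*V))"
    proof -
      assume e: "X (Suc m) - X m = dt/2*(al 0 * (N (Suc m) - N m) +
       ((\<Sum>k\<le>Suc m'. N k * al (real (Suc (Suc m') - k) * dt)) - (\<Sum>k\<le>m'. N k * al (real (Suc m' - k) * dt))))"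
      have h3: "\<bar>al 0 * (N (Suc m) - N m)\<bar> = al 0 * \<bar>N (Suc m) - N m\<bar>" using a0 by (simp add: abs_mult)
      have "\<bar>al 0 * (N (Suc m) - N m) +
       ((\<Sum>k\<le>Suc m'. N k * al (real (Suc (Suc m') - k) * dt)) - (\<Sum>k\<le>m'. N k * al (real (Suc m' - k) * dt)))\<bar>
        \<le> al 0 * \<bar>N (Suc m) - N m\<bar> + (B*A + B*V)"
        unfolding SS using b1 b2 h3 by linarith
      hence "dt/2 * \<bar>al 0 * (N (Suc m) - N m) +
       ((\<Sum>k\<le>Suc m'. N k * al (real (Suc (Suc m') - k) * dt)) - (\<Sum>k\<le>m'. N k * al (real (Suc m' - k) * dt)))\<bar>
        \<le> dt/2 * (al 0 * \<bar>N (Suc m) - N m\<bar> + (B*A + B*V))"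
        using dt by (intro mult_left_mono) auto
      thus ?thesis unfolding e using dt by (simp add: abs_mult)
    qed
    also have "\<dots> \<le> dt/2*al 0*\<bar>N (Suc m) - N m\<bar> + dt*(B*(A+V))"
    proof -
      have "0 \<le> A*(B*dt)" "0 \<le> B*(V*dt)" using dt B0 V0 al0A a0 by auto
      thus ?thesis by (simp add: algebra_simps)
    qed
    finally show ?thesis .
  qed
qed


lemma combine:
  fixes T T' \<delta> \<xi> dt a0 D L c1 P K NN C :: real
  assumes x: "\<xi> \<le> dt/2*a0*\<delta> + dt*c1" and d: "\<delta> \<le> D*L*\<xi> + dt*P*T + dt*P^2*L"
    and t: "T' \<le> T + dt*K*L + \<delta> + dt*P*NN" and "0 \<le> NN" "NN \<le> P*L" "\<delta> \<ge> 0" "T \<ge> 0" "dt > 0"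
    and a: "dt*(a0*D*L) \<le> 1" "a0 \<ge> 0" "D \<ge> 0" "L \<ge> 0" "P \<ge> 0" "K \<ge> 0" "c1 \<ge> 0"
    and C: "C = 2*P + K*L + 3*P^2*L + 2*D*L*c1 + 1"
  shows "T' + 1 \<le> (1 + C*dt)*(T + 1)"
proof -
  have DL: "D*L \<ge> 0" using a by simp
  have "D*L*\<xi> \<le> D*L*(dt/2*a0*\<delta> + dt*c1)" using mult_left_mono[OF x DL] .
  also have "\<dots> = (dt*(a0*D*L))/2*\<delta> + dt*(D*L*c1)" by (simp add: algebra_simps)
  also have "(dt*(a0*D*L))/2*\<delta> \<le> 1/2*\<delta>" using a(1) \<open>\<delta> \<ge> 0\<close> by (intro mult_right_mono) auto
  hence "(dt*(a0*D*L))/2*\<delta> + dt*(D*L*c1) \<le> 1/2*\<delta> + dt*(D*L*c1)" by simp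
  finally have "D*L*\<xi> \<le> 1/2*\<delta> + dt*(D*L*c1)" .
  with d have d2: "\<delta> \<le> 2*(dt*(D*L*c1)) + 2*(dt*P*T) + 2*(dt*P^2*L)" by linarith
  have n: "dt*P*NN \<le> dt*P*(P*L)" using assms by (intro mult_left_mono) auto
  have e1: "2*P*(dt*T) \<le> C*(dt*T)" using C assms DL by (intro mult_right_mono) (auto simp: mult_nonneg_nonneg)
  have e2: "(K*L + 2*(D*L*c1) + 3*(P^2*L))*dt \<le> C*dt" using C assms DL by (intro mult_right_mono) (auto simp: mult_nonneg_nonneg)
  have "T' \<le> T + 2*P*(dt*T) + (K*L + 2*(D*L*c1) + 3*(P^2*L))*dt"
    using t d2 n by (simp add: algebra_simps power2_eq_square)
  also have "\<dots> \<le> T + C*(dt*T) + C*dt" using e1 e2 by linarith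
  finally show ?thesis by (simp add: algebra_simps)
qed

lemma Nsum:
  fixes w r :: "nat \<Rightarrow> real"
  assumes ds: "ds > 0" and w: "\<And>j. j \<ge> 1 \<Longrightarrow> 0 \<le> w j" and ws: "summable (\<lambda>j. w (Suc j))"
    and r: "\<And>j. j \<ge> 1 \<Longrightarrow> 0 \<le> r j \<and> r j \<le> P"
  shows "summable (\<lambda>j. ds * r (Suc j) * w (Suc j))"
    and "0 \<le> (\<Sum>j. ds * r (Suc j) * w (Suc j))"
    and "(\<Sum>j. ds * r (Suc j) * w (Suc j)) \<le> P * (\<Sum>j. ds * w (Suc j))"
proof -
  have b: "norm (ds * r (Suc j) * w (Suc j)) \<le> P * (ds * w (Suc j))" for j
    using r[of "Suc j"] w[of "Suc j"] ds by (simp add: abs_mult mult_right_mono mult_left_mono algebra_simps)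
  have sP: "summable (\<lambda>j. P * (ds * w (Suc j)))" using ws by simp
  show s: "summable (\<lambda>j. ds * r (Suc j) * w (Suc j))"
    by (rule summable_comparison_test'[OF sP]) (use b in auto)
  show "0 \<le> (\<Sum>j. ds * r (Suc j) * w (Suc j))"
    by (rule suminf_nonneg[OF s]) (use r w ds in simp)
  have "(\<Sum>j. ds * r (Suc j) * w (Suc j)) \<le> (\<Sum>j. P * (ds * w (Suc j)))"
    by (rule suminf_le[OF _ s sP]) (use b in \<open>auto simp: abs_le_iff\<close>)
  also have "\<dots> = P * (\<Sum>j. ds * w (Suc j))" by (rule suminf_mult) (use ws in simp)
  finally show "(\<Sum>j. ds * r (Suc j) * w (Suc j)) \<le> P * (\<Sum>j. ds * w (Suc j))" .
qed

lemma coef_diff: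
  fixes w r r' :: "nat \<Rightarrow> real"
  assumes ds: "ds > 0" and w: "\<And>j. j \<ge> 1 \<Longrightarrow> 0 \<le> w j" and ws: "summable (\<lambda>j. w (Suc j))"
    and r: "\<And>j. j \<ge> 1 \<Longrightarrow> 0 \<le> r j \<and> r j \<le> P"
    and r': "\<And>j. j \<ge> 1 \<Longrightarrow> 0 \<le> r' j \<and> r' j \<le> P"
    and E: "\<And>j. j \<ge> 1 \<Longrightarrow> \<bar>r' j - r j\<bar> \<le> E"
  shows "\<bar>(\<Sum>j. ds * r' (Suc j) * w (Suc j)) - (\<Sum>j. ds * r (Suc j) * w (Suc j))\<bar> \<le> E * (\<Sum>j. ds * w (Suc j))"
proof -
  have s1: "summable (\<lambda>j. ds * r' (Suc j) * w (Suc j))" by (rule Nsum(1)[OF ds w ws r'])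
  have s2: "summable (\<lambda>j. ds * r (Suc j) * w (Suc j))" by (rule Nsum(1)[OF ds w ws r])
  have b: "\<bar>ds * r' (Suc j) * w (Suc j) - ds * r (Suc j) * w (Suc j)\<bar> \<le> E * (ds * w (Suc j))" for j
  proof -
    have "\<bar>ds * r' (Suc j) * w (Suc j) - ds * r (Suc j) * w (Suc j)\<bar> = \<bar>r' (Suc j) - r (Suc j)\<bar> * (ds * w (Suc j))"
    proof -
      have "ds * r' (Suc j) * w (Suc j) - ds * r (Suc j) * w (Suc j) = (r' (Suc j) - r (Suc j)) * (ds * w (Suc j))"
        by (simp add: algebra_simps)
      thus ?thesis using ds w[of "Suc j"] by (simp add: abs_mult)
    qed
    also have "\<dots> \<le> E * (ds * w (Suc j))" using E[of "Suc j"] ds w[of "Suc j"] by (intro mult_right_mono) auto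
    finally show ?thesis .
  qed
  have sE: "summable (\<lambda>j. E * (ds * w (Suc j)))" using ws by simp
  have "\<bar>\<Sum>j. ds * r' (Suc j) * w (Suc j) - ds * r (Suc j) * w (Suc j)\<bar> \<le> (\<Sum>j. E * (ds * w (Suc j)))"
    by (rule abs_suminf_le(2)[OF b sE])
  moreover have "(\<Sum>j. ds * r' (Suc j) * w (Suc j) - ds * r (Suc j) * w (Suc j)) =
     (\<Sum>j. ds * r' (Suc j) * w (Suc j)) - (\<Sum>j. ds * r (Suc j) * w (Suc j))" by (rule suminf_diff[OF s1 s2, symmetric])
  moreover have "(\<Sum>j. E * (ds * w (Suc j))) = E * (\<Sum>j. ds * w (Suc j))" by (rule suminf_mult) (use ws in simp)
  ultimately show ?thesis by simp
qed

theorem mainTheorem13: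
  fixes p :: "real \<Rightarrow> real \<Rightarrow> real" and \<alpha> :: "real \<Rightarrow> real" and L1 Linf :: real
  assumes "W1inf p"
    and "\<forall>s\<ge>0. \<forall>x\<ge>0. p s x \<ge> 0"
    and "\<forall>t\<ge>0. \<alpha> t \<ge> 0"
    and "bounded (\<alpha> ` {0..})"
    and "bounded_variation_on {0..} \<alpha>"
  shows "\<exists>\<tau>0 C1 C2. \<tau>0 > 0 \<and> C1 > 0 \<and> C2 > 0 \<and>
    (\<forall>ds dt (n :: nat \<Rightarrow> nat \<Rightarrow> real) X N.
       ds > 0 \<and> dt > 0 \<and> dt \<le> \<tau>0 \<and>
       (\<forall>j\<ge>1. n 0 j \<ge> 0) \<and>
       summable (\<lambda>j. ds * \<bar>n 0 (Suc j)\<bar>) \<and> norm1 ds (n 0) = L1 \<and>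
       bdd_above (range (\<lambda>j. \<bar>n 0 (Suc j)\<bar>)) \<and> norminf (n 0) = Linf \<and>
       TV_finite (n 0) \<and>
       DDM_CFL p \<alpha> ds dt (n 0) \<and>
       DDM_scheme p \<alpha> ds dt n X N
       \<longrightarrow> (\<forall>m. TV_finite (n m) \<and>
              TV (n m) \<le> exp (C1 * (real m * dt)) * TV (n 0)
                          + C2 * (exp (C1 * (real m * dt)) - 1)))"
proof -
  obtain K where K0: "K \<ge> 0" and
    pK: "\<forall>s s' x. s \<ge> 0 \<longrightarrow> s' \<ge> 0 \<longrightarrow> x \<ge> 0 \<longrightarrow> \<bar>p s x - p s' x\<bar> \<le> K * \<bar>s - s'\<bar>"
    using p_facts(1)[OF assms(1)] by blast
  define P where "P = pinf p"
  define D where "D = dXpinf p"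
  have pP: "0 \<le> p s x \<and> p s x \<le> P" if "s \<ge> 0" "x \<ge> 0" for s x
    using p_facts(2)[OF assms(1)] assms(2) that unfolding P_def by fastforce
  have P0: "P \<ge> 0" using pP[of 0 0] by simp
  have pD: "\<bar>p s x - p s y\<bar> \<le> D * \<bar>x - y\<bar>" if "s \<ge> 0" "x \<ge> 0" "y \<ge> 0" for s x y
    using p_facts(3)[OF assms(1)] that unfolding D_def by blast
  have D0: "D \<ge> 0" using p_facts(4)[OF assms(1)] unfolding D_def .
  obtain A where A: "\<And>t. t \<ge> 0 \<Longrightarrow> \<bar>\<alpha> t\<bar> \<le> A"
    using assms(4) unfolding bounded_iff by auto
  obtain V where V: "\<And>(n::nat) (t::nat \<Rightarrow> real). (\<forall>i\<le>n. t i \<ge> 0) \<and> (\<forall>i<n. t i \<le> t (Suc i)) \<Longrightarrow>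
      (\<Sum>i<n. \<bar>\<alpha> (t (Suc i)) - \<alpha> (t i)\<bar>) \<le> V"
    using assms(5) unfolding bounded_variation_on_def by auto
  have V0: "V \<ge> 0" using V[of 0 "\<lambda>_. 0"] by simp
  have a0: "\<alpha> 0 \<ge> 0" using assms(3) by simp
  have A0: "A \<ge> 0" using A[of 0] by simp
  define L where "L = \<bar>L1\<bar>"
  define c1 where "c1 = P*L*(A+V)"
  define C where "C = 2*P + K*L + 3*P^2*L + 2*D*L*c1 + 1"
  define \<tau> where "\<tau> = 1/(\<alpha> 0*D*L + 1)"
  have L0: "L \<ge> 0" unfolding L_def by simp
  have c10: "c1 \<ge> 0" unfolding c1_def using P0 L0 A0 V0 by simp
  have aDL: "\<alpha> 0*D*L \<ge> 0" using a0 D0 L0 by simp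
  have C0: "C > 0"
  proof -
    have "0 \<le> K*L" "0 \<le> 3*P^2*L" "0 \<le> 2*D*L*c1" using P0 L0 K0 D0 c10 by auto
    thus ?thesis unfolding C_def using P0 by linarith
  qed
  have \<tau>0: "\<tau> > 0" unfolding \<tau>_def using aDL by simp
  show ?thesis
  proof (rule exI[of _ \<tau>], rule exI[of _ C], rule exI[of _ "1::real"], intro conjI allI impI \<tau>0 C0 zero_less_one)
    fix ds dt :: real and n :: "nat \<Rightarrow> nat \<Rightarrow> real" and X N :: "nat \<Rightarrow> real" and m :: nat
    assume H: "ds > 0 \<and> dt > 0 \<and> dt \<le> \<tau> \<and>
       (\<forall>j\<ge>1. n 0 j \<ge> 0) \<and>
       summable (\<lambda>j. ds * \<bar>n 0 (Suc j)\<bar>) \<and> norm1 ds (n 0) = L1 \<and>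
       bdd_above (range (\<lambda>j. \<bar>n 0 (Suc j)\<bar>)) \<and> norminf (n 0) = Linf \<and>
       TV_finite (n 0) \<and>
       DDM_CFL p \<alpha> ds dt (n 0) \<and>
       DDM_scheme p \<alpha> ds dt n X N"
    have ds: "ds > 0" and dt: "dt > 0" and dtt: "dt \<le> \<tau>" and n0: "\<forall>j\<ge>1. n 0 j \<ge> 0"
      and n0s: "summable (\<lambda>j. ds * \<bar>n 0 (Suc j)\<bar>)" and n0m: "norm1 ds (n 0) = L1"
      and n0t: "TV_finite (n 0)" and CFL: "DDM_CFL p \<alpha> ds dt (n 0)" and S: "DDM_scheme p \<alpha> ds dt n X N"
      using H by blast+
    have X0: "X 0 = 0" and N0: "N 0 = (\<Sum>j. ds * p (sgrid ds (Suc j)) 0 * n 0 (Suc j))"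
      and nb: "\<And>m. n m 0 = N m"
      and nS: "\<And>m j. j \<ge> 1 \<Longrightarrow> n (Suc m) j = n m j - dt / ds * (n m j - n m (j - 1)) - dt * p (sgrid ds j) (X m) * n m j"
      and XS0: "\<And>m. X (Suc m) \<ge> 0"
      and XS: "\<And>m. X (Suc m) = dt / 2 * (\<alpha> 0 * (\<Sum>j. ds * p (sgrid ds (Suc j)) (X (Suc m)) * n (Suc m) (Suc j))
                     + (\<Sum>k\<le>m. N k * \<alpha> (real (Suc m - k) * dt)))"
      and NS: "\<And>m. N (Suc m) = (\<Sum>j. ds * p (sgrid ds (Suc j)) (X (Suc m)) * n (Suc m) (Suc j))"
      using S unfolding DDM_scheme_def by blast+
    define lam where "lam = dt/ds"
    have cfl: "lam + dt*P \<le> 1"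
    proof -
      have "dt < inverse (1/ds + P)" using CFL unfolding DDM_CFL_def P_def by blast
      moreover have pos: "1/ds + P > 0" using ds P0 by (simp add: add_pos_nonneg)
      ultimately have "dt * (1/ds + P) < 1" by (simp add: field_simps)
      thus ?thesis unfolding lam_def by (simp add: algebra_simps)
    qed
    have Xnn: "X k \<ge> 0" for k using X0 XS0 by (cases k) auto
    have Nm: "N k = (\<Sum>j. ds * p (sgrid ds (Suc j)) (X k) * n k (Suc j))" for k
      using N0 X0 NS by (cases k) auto
    have sgn: "sgrid ds j \<ge> 0" if "j \<ge> 1" for j
      using that ds unfolding sgrid_def by (intro mult_nonneg_nonneg) auto
    have qb: "0 \<le> p (sgrid ds j) (X k) \<and> p (sgrid ds j) (X k) \<le> P" if "j \<ge> 1" for j k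
      using pP[OF sgn[OF that] Xnn] .
    have qK: "\<bar>p (sgrid ds (Suc j)) (X k) - p (sgrid ds j) (X k)\<bar> \<le> K*ds" if "j \<ge> 1" for j k
    proof -
      have "\<bar>p (sgrid ds (Suc j)) (X k) - p (sgrid ds j) (X k)\<bar> \<le> K * \<bar>sgrid ds (Suc j) - sgrid ds j\<bar>"
        using pK sgn[of "Suc j"] sgn[OF that] Xnn[of k] that by auto
      moreover have "sgrid ds (Suc j) - sgrid ds j = ds" unfolding sgrid_def by (simp add: algebra_simps)
      ultimately show ?thesis using ds by simp
    qed
    have stepI: "ddm_step (n k) (n (Suc k)) (\<lambda>j. p (sgrid ds j) (X k)) lam dt ds P K"
      if "\<forall>j. 0 \<le> n k j" "summable (\<lambda>j. n k (Suc j))" "summable (\<lambda>j. \<bar>n k (Suc j) - n k j\<bar>)" for k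
      unfolding ddm_step_def using ds dt cfl qb qK that nS unfolding lam_def by auto
    have inv: "(\<forall>j. 0 \<le> n k j) \<and> summable (\<lambda>j. n k (Suc j)) \<and> (\<Sum>j. ds * n k (Suc j)) = L1
       \<and> summable (\<lambda>j. \<bar>n k (Suc j) - n k j\<bar>)" for k
    proof (induct k)
      case 0
      have sa: "summable (\<lambda>j. \<bar>n 0 (Suc j)\<bar>)" using n0s ds by simp
      have ab: "\<bar>n 0 (Suc j)\<bar> = n 0 (Suc j)" for j using n0 by simp
      have s: "summable (\<lambda>j. n 0 (Suc j))" using sa unfolding ab .
      have "n 0 0 \<ge> 0" using nb[of 0] Nm[of 0] Nsum(2)[OF ds _ s qb] n0 by auto
      hence "\<forall>j. 0 \<le> n 0 j" using n0 by (metis less_one not_le)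
      moreover have "(\<Sum>j. ds * n 0 (Suc j)) = L1" using n0m unfolding norm1_def ab .
      ultimately show ?case using s n0t unfolding TV_finite_def by blast
    next
      case (Suc k)
      then interpret st: ddm_step "n k" "n (Suc k)" "\<lambda>j. p (sgrid ds j) (X k)" lam dt ds P K
        using stepI by blast
      have vs: "summable (\<lambda>j. n (Suc k) (Suc j))" by (rule st.v_summ)
      have "n (Suc k) 0 \<ge> 0" using nb[of "Suc k"] Nm[of "Suc k"] Nsum(2)[OF ds _ vs qb] st.v_nonneg by auto
      hence "\<forall>j. 0 \<le> n (Suc k) j" using st.v_nonneg by (metis less_one not_le)
      moreover have "(\<Sum>j. ds * n (Suc k) (Suc j)) = L1" using st.mass Suc nb[of k] Nm[of k] by simp
      ultimately show ?case using vs st.tv_step(1) by blast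
    qed
    have L1L: "L1 = L"
    proof -
      have "0 \<le> (\<Sum>j. ds * n 0 (Suc j))" using inv[of 0] ds by (intro suminf_nonneg) auto
      thus ?thesis using inv[of 0] unfolding L_def by simp
    qed
    have Nb: "0 \<le> N k \<and> N k \<le> P*L" for k
    proof -
      have w: "\<And>j. j \<ge> 1 \<Longrightarrow> 0 \<le> n k j" and ws: "summable (\<lambda>j. n k (Suc j))" using inv[of k] by auto
      show ?thesis using Nsum(2,3)[OF ds w ws qb] inv[of k] Nm[of k] L1L by auto
    qed
    define T where "T k = (\<Sum>j. \<bar>n k (Suc j) - n k j\<bar>)" for k
    have T0: "T k \<ge> 0" for k unfolding T_def using inv[of k] by (intro suminf_nonneg) auto
    have Xd: "\<bar>X (Suc k) - X k\<bar> \<le> dt/2*\<alpha> 0*\<bar>N (Suc k) - N k\<bar> + dt*((P*L)*(A+V))" for k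
    proof (rule X_diff[where al=\<alpha> and N=N and X=X, OF dt A V V0 a0 Nb X0])
      fix m
      show "X (Suc m) = dt / 2 * (\<alpha> 0 * N (Suc m) + (\<Sum>k\<le>m. N k * \<alpha> (real (Suc m - k) * dt)))"
        using XS[of m] unfolding NS[of m, symmetric] .
    qed
    have step: "T (Suc k) + 1 \<le> (1 + C*dt)*(T k + 1)" for k
    proof -
      interpret st: ddm_step "n k" "n (Suc k)" "\<lambda>j. p (sgrid ds j) (X k)" lam dt ds P K
        using stepI inv by blast
      have t: "T (Suc k) \<le> T k + dt*K*L + \<bar>N (Suc k) - N k\<bar> + dt*P*N k"
        using st.tv_step(2) inv[of k] L1L nb[of k] nb[of "Suc k"] unfolding T_def by (simp add: abs_minus_commute)
      have d1: "\<bar>N (Suc k) - (\<Sum>j. ds * p (sgrid ds (Suc j)) (X k) * n (Suc k) (Suc j))\<bar> \<le> (D*\<bar>X (Suc k) - X k\<bar>) * L"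
      proof -
        have "\<bar>(\<Sum>j. ds * p (sgrid ds (Suc j)) (X (Suc k)) * n (Suc k) (Suc j)) - (\<Sum>j. ds * p (sgrid ds (Suc j)) (X k) * n (Suc k) (Suc j))\<bar>
           \<le> (D*\<bar>X (Suc k) - X k\<bar>) * (\<Sum>j. ds * n (Suc k) (Suc j))"
          by (rule coef_diff[OF ds _ st.v_summ qb qb]) (use st.v_nonneg pD sgn Xnn in auto)
        thus ?thesis using Nm[of "Suc k"] inv[of "Suc k"] L1L by simp
      qed
      have d2: "\<bar>(\<Sum>j. ds * p (sgrid ds (Suc j)) (X k) * n (Suc k) (Suc j)) - N k\<bar> \<le> dt*P*T k + dt*P^2*L"
        using st.N_step Nm[of k] inv[of k] L1L unfolding T_def by simp
      have d: "\<bar>N (Suc k) - N k\<bar> \<le> D*L*\<bar>X (Suc k) - X k\<bar> + dt*P*T k + dt*P^2*L"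
      proof -
        have "D*\<bar>X (Suc k) - X k\<bar>*L = D*L*\<bar>X (Suc k) - X k\<bar>" by (simp add: algebra_simps)
        thus ?thesis using d1 d2 by linarith
      qed
      have a: "dt*(\<alpha> 0*D*L) \<le> 1"
      proof -
        have "dt * (\<alpha> 0*D*L + 1) \<le> 1" using dtt aDL unfolding \<tau>_def by (simp add: field_simps)
        thus ?thesis using dt by (simp add: algebra_simps)
      qed
      show ?thesis
        by (rule combine[OF Xd d t]) (use Nb T0 dt a a0 D0 L0 P0 K0 c10 in \<open>auto simp: C_def c1_def\<close>)
    qed
    have bnd: "T k + 1 \<le> exp (C * (real k * dt)) * (T 0 + 1)" for k
    proof (induct k)
      case 0 show ?case by simp
    next
      case (Suc k)
      have "T (Suc k) + 1 \<le> (1 + C*dt)*(T k + 1)" by (rule step)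
      also have "\<dots> \<le> exp (C*dt) * (T k + 1)"
        using exp_ge_add_one_self[of "C*dt"] T0[of k] by (intro mult_right_mono) auto
      also have "\<dots> \<le> exp (C*dt) * (exp (C * (real k * dt)) * (T 0 + 1))"
        using Suc by (intro mult_left_mono) auto
      also have "\<dots> = exp (C * (real (Suc k) * dt)) * (T 0 + 1)"
        by (simp add: mult_exp_exp[symmetric] algebra_simps)
      finally show ?case .
    qed
    show "TV_finite (n m)" using inv[of m] unfolding TV_finite_def by blast
    show "TV (n m) \<le> exp (C * (real m * dt)) * TV (n 0) + 1 * (exp (C * (real m * dt)) - 1)"
    proof -
      have "TV (n k) = T k" for k unfolding TV_def T_def ..
      thus ?thesis using bnd[of m] by (simp add: algebra_simps)
    qed
  qed
qed

end
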